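(* Let $G$ be a graph on $n$ vertices and $A\in\mathcal{S}(G)$ a matrix with the SAP and $\operatorname{rank}(A)=r$. Then for every integer $r'$ with $r\le r'\le n$ there is a matrix $A'\in\mathcal{S}(G)$ with the SAP and $\operatorname{rank}(A')=r'$.
   Context: For a graph $G$ on vertex set $\{1,\ldots,n\}$, $\mathcal{S}(G)$ is the set of real symmetric $n\times n$ matrices whose $(i,j)$-entry for $i\neq j$ is nonzero if and only if $\{i,j\}$ is an edge (diagonal entries arbitrary). $\circ$ is the entrywise product. A symmetric matrix $A$ has the strong Arnol'd property (SAP) if $X=O$ is the only real symmetric matrix with $A\circ X=O$, $I\circ X=O$, $AX=O$. *)

theory Defs
  imports "HOL-Analysis.Analysis"
begin

definition simple_graph :: "('n::finite \<Rightarrow> 'n \<Rightarrow> bool) \<Rightarrow> bool" where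
  "simple_graph E \<longleftrightarrow> (\<forall>i j. E i j \<longrightarrow> E j i) \<and> (\<forall>i. \<not> E i i)"

definition symmetric_matrix :: "real^'n^'n \<Rightarrow> bool" where
  "symmetric_matrix A \<longleftrightarrow> transpose A = A"

definition S_graph :: "('n::finite \<Rightarrow> 'n \<Rightarrow> bool) \<Rightarrow> (real^'n^'n) set" where
  "S_graph E = {A. symmetric_matrix A \<and> (\<forall>i j. i \<noteq> j \<longrightarrow> (A $ i $ j \<noteq> 0 \<longleftrightarrow> E i j))}"

definition hadamard :: "real^'n^'m \<Rightarrow> real^'n^'m \<Rightarrow> real^'n^'m" where
  "hadamard A B = (\<chi> i j. A $ i $ j * B $ i $ j)"

definition SAP :: "real^'n^'n \<Rightarrow> bool" where
  "SAP A \<longleftrightarrow> (\<forall>X::real^'n^'n. symmetric_matrix X \<and> hadamard A X = 0 \<and>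
      hadamard (mat 1) X = 0 \<and> A ** X = 0 \<longrightarrow> X = 0)"

end

theory Submission
  imports Defs
begin

lemma bounded_below_on:
  fixes f :: "'a::euclidean_space \<Rightarrow> 'b::euclidean_space"
  assumes lf: "linear f" and W: "subspace W" and k: "\<forall>x\<in>W. f x = 0 \<longrightarrow> x = 0"
  shows "\<exists>c>0. \<forall>x\<in>W. c * norm x \<le> norm (f x)"
proof -
  have sW: "span W = W" using W by (simp add: span_eq_iff)
  have "inj_on f (span W)" unfolding sW using linear_inj_on_iff_eq_0[OF lf W] k by simp
  then obtain g where lg: "linear g" and g: "\<forall>x\<in>span W. g (f x) = x"
    using linear_inj_on_left_inverse[OF lf] by blast
  obtain B where B: "B > 0" "\<And>y. norm (g y) \<le> B * norm y" using linear_bounded_pos[OF lg] by blast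
  show ?thesis
  proof (intro exI[of _ "1/B"] conjI ballI)
    show "0 < 1/B" using B by simp
    fix x assume "x \<in> W"
    then have "norm x \<le> B * norm (f x)" using g B(2)[of "f x"] span_superset by fastforce
    then show "1/B * norm x \<le> norm (f x)" using B by (simp add: field_simps)
  qed
qed

lemma rank_row_change:
  fixes B B' :: "real^'n^'m"
  assumes "\<forall>i. i \<noteq> k \<longrightarrow> B' $ i = B $ i"
  shows "rank B' \<le> rank B + 1"
proof -
  have "rows B' \<subseteq> insert (row k B') (rows B)"
    using assms by (auto simp: rows_def row_def)
  then have "dim (rows B') \<le> dim (insert (row k B') (rows B))" by (rule dim_subset)
  also have "\<dots> \<le> dim (rows B) + 1" by (simp add: dim_insert)
  finally show ?thesis by (simp add: row_rank_def)
qed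

lemma discrete_ivt:
  fixes f :: "nat \<Rightarrow> nat"
  assumes "f 0 \<le> r" "r \<le> f N" "\<forall>k<N. f (Suc k) \<le> f k + 1"
  shows "\<exists>k\<le>N. f k = r"
  using assms
proof (induction N)
  case 0 then show ?case by auto
next
  case (Suc N)
  show ?case
  proof (cases "r \<le> f N")
    case True
    with Suc.IH Suc.prems obtain k where "k \<le> N" "f k = r" by auto
    then show ?thesis by (intro exI[of _ k]) auto
  next
    case False
    with Suc.prems have "f (Suc N) = r" by fastforce
    then show ?thesis by blast
  qed
qed

lemma sum_diag_aux:
  fixes a x :: "'n::finite \<Rightarrow> real"
  shows "(\<Sum>l\<in>UNIV. (a l + (if i = l \<and> P then t else 0)) * x l) = (\<Sum>l\<in>UNIV. a l * x l) + (if P then t * x i else 0)"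
proof -
  have "(\<Sum>l\<in>UNIV. (if i = l \<and> P then t else 0) * x l) = (if P then t * x i else 0)"
    by (cases P) (simp_all add: if_distrib[of "\<lambda>y. y * _"] cong: if_cong)
  then show ?thesis by (simp add: distrib_right sum.distrib)
qed

theorem corollary3p6:
  fixes E :: "'n::finite \<Rightarrow> 'n \<Rightarrow> bool" and A :: "real^'n^'n" and r' :: nat
  assumes "simple_graph E"
    and "A \<in> S_graph E"
    and "SAP A"
    and "rank A \<le> r'" and "r' \<le> CARD('n)"
  shows "\<exists>A'. A' \<in> S_graph E \<and> SAP A' \<and> rank A' = r'"
proof -
  have tA: "transpose A = A" using assms(2) by (simp add: S_graph_def symmetric_matrix_def)
  have symA: "A $ j $ i = A $ i $ j" for i j
  proof -
    have "transpose A $ i $ j = A $ j $ i" by (simp add: transpose_def)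
    then show ?thesis using tA by simp
  qed
  have Aoff: "\<And>i j. i \<noteq> j \<Longrightarrow> (A $ i $ j \<noteq> 0 \<longleftrightarrow> E i j)"
    using assms(2) unfolding S_graph_def by auto
  obtain xs :: "'n list" where xs: "set xs = UNIV" "distinct xs"
    using finite_distinct_list[OF finite_class.finite_UNIV] by blast
  define N where "N = length xs"
  have N: "N = CARD('n)" using xs distinct_card unfolding N_def by fastforce
  define M where "M t k = (\<chi> i j. A$i$j + (if i = j \<and> i \<in> set (take k xs) then t else 0))"
    for t :: real and k :: nat
  have MS: "M t k \<in> S_graph E" for t k
    unfolding S_graph_def symmetric_matrix_def M_def
    using symA Aoff by (auto simp: vec_eq_iff transpose_def)
  define V where "V = {X::real^'n^'n. symmetric_matrix X \<and> hadamard A X = 0 \<and> hadamard (mat 1) X = 0}"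
  have linAX: "linear (\<lambda>X::real^'n^'n. A ** X)"
    by (rule linearI) (simp_all add: vec_eq_iff matrix_matrix_mult_def sum_distrib_left mult.left_commute distrib_left sum.distrib)
  have subV: "subspace V"
    unfolding subspace_def V_def symmetric_matrix_def hadamard_def
    by (auto simp: vec_eq_iff transpose_def algebra_simps; metis add.right_neutral)
  have kerV: "\<forall>X\<in>V. A ** X = 0 \<longrightarrow> X = 0"
    using assms(3) unfolding SAP_def V_def by blast
  obtain c where c: "c > 0" "\<forall>X\<in>V. c * norm X \<le> norm (A ** X)"
    using bounded_below_on[OF linAX subV kerV] by blast
  have SAPM: "SAP (M t k)" if t: "0 < t" "t < c" for t k
    unfolding SAP_def
  proof (intro allI impI)
    fix X :: "real^'n^'n"
    assume H: "symmetric_matrix X \<and> hadamard (M t k) X = 0 \<and> hadamard (mat 1) X = 0 \<and> M t k ** X = 0"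
    have diag: "X $ i $ i = 0" for i
    proof -
      have "(hadamard (mat 1) X) $ i $ i = 0" using H by simp
      then show ?thesis by (simp add: hadamard_def mat_def)
    qed
    have "hadamard A X = 0"
    proof -
      have "A $ i $ j * X $ i $ j = 0" for i j
      proof (cases "i = j")
        case True then show ?thesis using diag by simp
      next
        case False
        have "(hadamard (M t k) X) $ i $ j = 0" using H by simp
        then have "M t k $ i $ j * X $ i $ j = 0" by (simp add: hadamard_def)
        then show ?thesis using False by (simp add: M_def)
      qed
      then show ?thesis unfolding hadamard_def by (simp add: vec_eq_iff)
    qed
    then have XV: "X \<in> V" using H unfolding V_def by blast
    define Q where "Q = (\<chi> i j. if i \<in> set (take k xs) then X$i$j else 0)"
    have "M t k ** X = A ** X + t *\<^sub>R Q"
    proof -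
      have "(\<Sum>l\<in>UNIV. (A $ i $ l + (if i = l \<and> i \<in> set (take k xs) then t else 0)) * X $ l $ j)
          = (\<Sum>l\<in>UNIV. A $ i $ l * X $ l $ j) + (if i \<in> set (take k xs) then t * X $ i $ j else 0)"
        for i j
        by (rule sum_diag_aux)
      then show ?thesis
        unfolding M_def Q_def matrix_matrix_mult_def by (simp add: vec_eq_iff)
    qed
    with H have AX: "A ** X = - (t *\<^sub>R Q)" by (simp add: eq_neg_iff_add_eq_0 add.commute)
    have "norm Q \<le> norm X"
    proof (rule norm_le_componentwise_cart)
      fix i
      have "Q $ i = (if i \<in> set (take k xs) then X $ i else 0)"
        unfolding Q_def by (simp add: vec_eq_iff)
      then show "norm (Q $ i) \<le> norm (X $ i)" by simp
    qed
    have "norm (A ** X) = t * norm Q" using AX t by simp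
    also have "\<dots> \<le> t * norm X" using \<open>norm Q \<le> norm X\<close> t by simp
    finally have "c * norm X \<le> t * norm X" using c(2) XV by fastforce
    then show "X = 0" using t
      by (metis linorder_not_le mult_less_cancel_right norm_eq_zero norm_not_less_zero order_le_less)
  qed
  define W where "W = {v::real^'n. \<forall>w. A *v w = 0 \<longrightarrow> v \<bullet> w = 0}"
  have subW: "subspace W"
    unfolding subspace_def W_def by (auto simp: inner_add_left)
  have kerW: "\<forall>v\<in>W. A *v v = 0 \<longrightarrow> v = 0"
    unfolding W_def by auto
  obtain c' where c': "c' > 0" "\<forall>v\<in>W. c' * norm v \<le> norm (A *v v)"
    using bounded_below_on[OF matrix_vector_mul_linear subW kerW] by blast
  have fullM: "rank (M t N) = CARD('n)" if t: "0 < t" "t < c'" for t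
  proof (rule ccontr)
    assume "rank (M t N) \<noteq> CARD('n)"
    then obtain v where v: "v \<noteq> 0" "M t N *v v = 0"
      using matrix_nonfull_linear_equations_eq by blast
    have "M t N *v v = A *v v + t *\<^sub>R v"
    proof -
      have "(\<Sum>j\<in>UNIV. (A $ i $ j + (if i = j \<and> i \<in> set (take N xs) then t else 0)) * v $ j)
           = (\<Sum>j\<in>UNIV. A $ i $ j * v $ j) + (if i \<in> set (take N xs) then t * v $ i else 0)" for i
        by (rule sum_diag_aux)
      then show ?thesis
        unfolding M_def matrix_vector_mult_def using xs N_def by (simp add: vec_eq_iff)
    qed
    with v have Av: "A *v v = - (t *\<^sub>R v)" by (simp add: eq_neg_iff_add_eq_0 add.commute)
    have "v \<in> W"
      unfolding W_def mem_Collect_eq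
    proof (intro allI impI)
      fix w assume w: "A *v w = 0"
      have "(A *v v) \<bullet> w = v \<bullet> (A *v w)"
        by (metis dot_lmul_matrix tA transpose_matrix_vector)
      then have "- t * (v \<bullet> w) = 0" using Av w by simp
      then show "v \<bullet> w = 0" using t by simp
    qed
    then have "c' * norm v \<le> norm (A *v v)" using c' by blast
    also have "\<dots> = t * norm v" using Av t by simp
    finally have "c' * norm v \<le> t * norm v" .
    then have "v = 0" using t
      by (metis linorder_not_le mult_less_cancel_right norm_eq_zero norm_not_less_zero order_le_less)
    then show False using v by simp
  qed
  define t where "t = min c c' / 2"
  have t: "0 < t" "t < c" "t < c'" using c c' unfolding t_def by auto
  define f where "f k = rank (M t k)" for k
  have f0: "f 0 = rank A"
    unfolding f_def M_def by (simp add: vec_eq_iff)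
  have fN: "f N = CARD('n)" unfolding f_def using fullM t by simp
  have fstep: "\<forall>k<N. f (Suc k) \<le> f k + 1"
  proof (intro allI impI)
    fix k assume k: "k < N"
    have "set (take (Suc k) xs) = insert (xs ! k) (set (take k xs))"
      using k unfolding N_def by (simp add: take_Suc_conv_app_nth)
    then have "\<forall>i. i \<noteq> xs ! k \<longrightarrow> M t (Suc k) $ i = M t k $ i"
      unfolding M_def by (simp add: vec_eq_iff)
    then show "f (Suc k) \<le> f k + 1" unfolding f_def by (rule rank_row_change)
  qed
  obtain k where "f k = r'"
    using discrete_ivt[of f r' N] f0 fN fstep assms(4,5) by auto
  then show ?thesis using MS SAPM[OF t(1,2)] unfolding f_def by blast
qed

end
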